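(* The set $\mathcal{B}_{2,4}$ consisting of the six identities (M1) $(xy)(zt)=(xz)(yt)$, (M2) $(xy)(zt)=(ty)(zx)$, (M3) $((xy)z)t=((xt)z)y$, (M4) $(x(yz))t=(x(tz))y$, (M5) $x((yz)t)=z((yx)t)$, (M6) $x(y(zt))=z(y(xt))$, together with $x(xy)=y$, is a basis for $\Sigma_{2,4}$.
   Context: $\Sigma_{2,4}$ is the set of groupoid identities satisfied in the integers $\mathbb{Z}$ by both binary operations $x-y$ and $-x-y$. A basis is a set of identities whose equational consequences are exactly $\Sigma_{2,4}$. *)

theory Defs
  imports Main
begin

datatype gterm = Var nat | App gterm gterm (infixl "\<cdot>" 70)

primrec eval :: "('a \<Rightarrow> 'a \<Rightarrow> 'a) \<Rightarrow> (nat \<Rightarrow> 'a) \<Rightarrow> gterm \<Rightarrow> 'a" where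
  "eval f v (Var n) = v n"
| "eval f v (App s t) = f (eval f v s) (eval f v t)"

primrec subst :: "(nat \<Rightarrow> gterm) \<Rightarrow> gterm \<Rightarrow> gterm" where
  "subst \<sigma> (Var n) = \<sigma> n"
| "subst \<sigma> (App s t) = App (subst \<sigma> s) (subst \<sigma> t)"

inductive derivable :: "(gterm \<times> gterm) set \<Rightarrow> gterm \<Rightarrow> gterm \<Rightarrow> bool" for E where
  ax: "(s, t) \<in> E \<Longrightarrow> derivable E (subst \<sigma> s) (subst \<sigma> t)"
| refl: "derivable E s s"
| sym: "derivable E s t \<Longrightarrow> derivable E t s"
| trans: "derivable E s t \<Longrightarrow> derivable E t u \<Longrightarrow> derivable E s u"
| cong: "derivable E s s' \<Longrightarrow> derivable E t t' \<Longrightarrow> derivable E (App s t) (App s' t')"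

definition consequences :: "(gterm \<times> gterm) set \<Rightarrow> (gterm \<times> gterm) set" where
  "consequences E = {(s, t). derivable E s t}"

definition holds_in :: "('a \<Rightarrow> 'a \<Rightarrow> 'a) \<Rightarrow> gterm \<times> gterm \<Rightarrow> bool" where
  "holds_in f e \<longleftrightarrow> (\<forall>v. eval f v (fst e) = eval f v (snd e))"

definition Sigma24 :: "(gterm \<times> gterm) set" where
  "Sigma24 = {e. holds_in (\<lambda>x y :: int. x - y) e \<and> holds_in (\<lambda>x y :: int. - x - y) e}"

definition is_basis :: "(gterm \<times> gterm) set \<Rightarrow> (gterm \<times> gterm) set \<Rightarrow> bool" where
  "is_basis B \<Sigma> \<longleftrightarrow> consequences B = \<Sigma>"

abbreviation "vx \<equiv> Var 0"
abbreviation "vy \<equiv> Var 1"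
abbreviation "vz \<equiv> Var 2"
abbreviation "vt \<equiv> Var 3"

definition B24 :: "(gterm \<times> gterm) set" where
  "B24 = {
     ((vx \<cdot> vy) \<cdot> (vz \<cdot> vt), (vx \<cdot> vz) \<cdot> (vy \<cdot> vt)),
     ((vx \<cdot> vy) \<cdot> (vz \<cdot> vt), (vt \<cdot> vy) \<cdot> (vz \<cdot> vx)),
     (((vx \<cdot> vy) \<cdot> vz) \<cdot> vt, ((vx \<cdot> vt) \<cdot> vz) \<cdot> vy),
     ((vx \<cdot> (vy \<cdot> vz)) \<cdot> vt, (vx \<cdot> (vt \<cdot> vz)) \<cdot> vy),
     (vx \<cdot> ((vy \<cdot> vz) \<cdot> vt), vz \<cdot> ((vy \<cdot> vx) \<cdot> vt)),
     (vx \<cdot> (vy \<cdot> (vz \<cdot> vt)), vz \<cdot> (vy \<cdot> (vx \<cdot> vt)))}"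

end

theory Submission
  imports Defs "HOL-Library.Multiset"
begin

locale grp24 =
  fixes m :: "'a \<Rightarrow> 'a \<Rightarrow> 'a" (infixl "\<star>" 70)
  assumes L: "x \<star> (x \<star> y) = y"
  and M1: "(x \<star> y) \<star> (z \<star> t) = (x \<star> z) \<star> (y \<star> t)"
  and M2: "(x \<star> y) \<star> (z \<star> t) = (t \<star> y) \<star> (z \<star> x)"
  and M3: "((x \<star> y) \<star> z) \<star> t = ((x \<star> t) \<star> z) \<star> y"
  and M4: "(x \<star> (y \<star> z)) \<star> t = (x \<star> (t \<star> z)) \<star> y"
  and M5: "x \<star> ((y \<star> z) \<star> t) = z \<star> ((y \<star> x) \<star> t)"
  and M6: "x \<star> (y \<star> (z \<star> t)) = z \<star> (y \<star> (x \<star> t))"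
begin
lemma g_comm: "(a \<star> e) \<star> ((e\<star>e) \<star> b) = (b \<star> e) \<star> ((e\<star>e) \<star> a)"
  by (rule M2)
lemma g_assoc: "(a \<star> e) \<star> ((e\<star>e) \<star> ((b \<star> e) \<star> ((e\<star>e) \<star> c))) = (((a \<star> e) \<star> ((e\<star>e) \<star> b)) \<star> e) \<star> ((e\<star>e) \<star> c)"
  by (metis M1 M4 M5)
lemma g_neg: "(((e\<star>e) \<star> ((a \<star> e) \<star> e)) \<star> e) \<star> ((e\<star>e) \<star> a) = e"
  using L M4 M5 by simp
lemma g_phiadd: "((a \<star> e) \<star> ((e\<star>e) \<star> b)) \<star> (e\<star>e) = ((a\<star>(e\<star>e)) \<star> e) \<star> ((e\<star>e) \<star> (b\<star>(e\<star>e)))"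
  by (metis L M5 M1)
lemma g_phiphi: "(a \<star> (e\<star>e)) \<star> (e\<star>e) = a"
  by (metis L M2)
lemma g_p1: "((a \<star> b) \<star> e) \<star> ((e\<star>e) \<star> b) = ((a \<star> (e\<star>e)) \<star> e) \<star> ((e\<star>e) \<star> (e\<star>e))"
  using L M3 M4 M5 M6 by simp
end

definition EE where "EE = insert (vx \<cdot> (vx \<cdot> vy), vy) B24"

quotient_type Q = gterm / "derivable EE"
proof (rule equivpI)
  show "reflp (derivable EE)" by (rule reflpI) (rule derivable.refl)
  show "symp (derivable EE)" by (rule sympI) (erule derivable.sym)
  show "transp (derivable EE)" by (rule transpI) (erule (1) derivable.trans)
qed

lift_definition qm :: "Q \<Rightarrow> Q \<Rightarrow> Q" is App
  by (rule derivable.cong)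

definition sg :: "gterm \<Rightarrow> gterm \<Rightarrow> gterm \<Rightarrow> gterm \<Rightarrow> nat \<Rightarrow> gterm" where
  "sg a b c d n = (if n = 0 then a else if n = 1 then b else if n = 2 then c else d)"

lemma sg_simps[simp]: "sg a b c d 0 = a" "sg a b c d 1 = b" "sg a b c d 2 = c" "sg a b c d 3 = d"
  by (simp_all add: sg_def)

lemma axE: "(s, t) \<in> EE \<Longrightarrow> derivable EE (subst (sg a b c d) s) (subst (sg a b c d) t)"
  by (rule derivable.ax)

interpretation Q: grp24 qm
proof
  fix x y z t :: Q
  show "qm x (qm x y) = y"
    apply transfer
    subgoal for a b using axE[of "vx \<cdot> (vx \<cdot> vy)" vy a b a a] by (simp add: EE_def sg_def) done
  show "qm (qm x y) (qm z t) = qm (qm x z) (qm y t)"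
    apply transfer
    subgoal for a b c d using axE[of "(vx \<cdot> vy) \<cdot> (vz \<cdot> vt)" "(vx \<cdot> vz) \<cdot> (vy \<cdot> vt)" a b c d]
      by (simp add: EE_def B24_def sg_def) done
  show "qm (qm x y) (qm z t) = qm (qm t y) (qm z x)"
    apply transfer
    subgoal for a b c d using axE[of "(vx \<cdot> vy) \<cdot> (vz \<cdot> vt)" "(vt \<cdot> vy) \<cdot> (vz \<cdot> vx)" a b c d]
      by (simp add: EE_def B24_def sg_def) done
  show "qm (qm (qm x y) z) t = qm (qm (qm x t) z) y"
    apply transfer
    subgoal for a b c d using axE[of "((vx \<cdot> vy) \<cdot> vz) \<cdot> vt" "((vx \<cdot> vt) \<cdot> vz) \<cdot> vy" a b c d]
      by (simp add: EE_def B24_def sg_def) done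
  show "qm (qm x (qm y z)) t = qm (qm x (qm t z)) y"
    apply transfer
    subgoal for a b c d using axE[of "(vx \<cdot> (vy \<cdot> vz)) \<cdot> vt" "(vx \<cdot> (vt \<cdot> vz)) \<cdot> vy" a b c d]
      by (simp add: EE_def B24_def sg_def) done
  show "qm x (qm (qm y z) t) = qm z (qm (qm y x) t)"
    apply transfer
    subgoal for a b c d using axE[of "vx \<cdot> ((vy \<cdot> vz) \<cdot> vt)" "vz \<cdot> ((vy \<cdot> vx) \<cdot> vt)" a b c d]
      by (simp add: EE_def B24_def sg_def) done
  show "qm x (qm y (qm z t)) = qm z (qm y (qm x t))"
    apply transfer
    subgoal for a b c d using axE[of "vx \<cdot> (vy \<cdot> (vz \<cdot> vt))" "vz \<cdot> (vy \<cdot> (vx \<cdot> vt))" a b c d]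
      by (simp add: EE_def B24_def sg_def) done
qed


definition eQ :: Q where "eQ = abs_Q (Var 0)"
definition kQ :: Q where "kQ = qm eQ eQ"

instantiation Q :: ab_group_add
begin
definition zero_Q :: Q where "zero_Q = eQ"
definition plus_Q :: "Q \<Rightarrow> Q \<Rightarrow> Q" where "plus_Q a b = qm (qm a eQ) (qm kQ b)"
definition uminus_Q :: "Q \<Rightarrow> Q" where "uminus_Q a = qm kQ (qm (qm a eQ) eQ)"
definition minus_Q :: "Q \<Rightarrow> Q \<Rightarrow> Q" where "minus_Q a b = a + (- b)"
instance
proof
  fix a b c :: Q
  show "a + b + c = a + (b + c)"
    unfolding plus_Q_def kQ_def by (rule Q.g_assoc[symmetric])
  show "a + b = b + a"
    unfolding plus_Q_def kQ_def by (rule Q.g_comm)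
  show "0 + a = a"
    unfolding plus_Q_def kQ_def zero_Q_def by (rule Q.L)
  show "- a + a = 0"
    unfolding plus_Q_def kQ_def zero_Q_def uminus_Q_def by (rule Q.g_neg)
  show "a - b = a + - b" by (rule minus_Q_def)
qed
end

definition phi :: "Q \<Rightarrow> Q" where "phi a = qm a kQ"

lemma phi_add: "phi (a + b) = phi a + phi b"
  unfolding phi_def plus_Q_def kQ_def by (rule Q.g_phiadd)

lemma phi_phi: "phi (phi a) = a"
  unfolding phi_def kQ_def by (rule Q.g_phiphi)

lemma phi_zero: "phi 0 = 0"
  unfolding phi_def kQ_def zero_Q_def by (rule Q.L)

lemma phi_uminus: "phi (- a) = - phi a"
proof -
  have "phi (- a) + phi a = 0" using phi_add[of "-a" a] phi_zero by simp
  thus ?thesis by (simp add: eq_neg_iff_add_eq_0)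
qed

lemma phi_diff: "phi (a - b) = phi a - phi b"
  by (simp only: diff_conv_add_uminus phi_add phi_uminus)

lemma qm_formula: "qm a b = phi a + kQ - b"
proof -
  have "qm a b + b = phi a + kQ"
    unfolding phi_def plus_Q_def kQ_def by (rule Q.g_p1)
  thus ?thesis by (simp add: eq_diff_eq)
qed


definition flp :: "bool \<times> nat \<Rightarrow> bool \<times> nat" where "flp x = (\<not> fst x, snd x)"

fun Pm :: "gterm \<Rightarrow> (bool \<times> nat) multiset" and Nm :: "gterm \<Rightarrow> (bool \<times> nat) multiset" where
  "Pm (Var n) = (if n = 0 then {#} else {#(False, n)#})"
| "Pm (App s t) = image_mset flp (Pm s) + Nm t + {#(False, 0)#}"
| "Nm (Var n) = {#}"
| "Nm (App s t) = image_mset flp (Nm s) + Pm t"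

definition genQ :: "nat \<Rightarrow> Q" where "genQ n = (if n = 0 then kQ else abs_Q (Var n))"
definition IQ :: "bool \<times> nat \<Rightarrow> Q" where "IQ x = (if fst x then phi (genQ (snd x)) else genQ (snd x))"

definition SQ :: "(bool \<times> nat) multiset \<Rightarrow> Q" where "SQ M = sum_mset (image_mset IQ M)"

lemma IQ_flp: "IQ (flp x) = phi (IQ x)"
  by (cases x) (simp add: IQ_def flp_def phi_phi)

lemma SQ_flp: "SQ (image_mset flp M) = phi (SQ M)"
  by (induction M) (simp_all add: SQ_def phi_zero phi_add IQ_flp)

lemma SQ_plus: "SQ (M + N) = SQ M + SQ N"
  by (simp add: SQ_def)

lemma SQ_single: "SQ {#x#} = IQ x"
  by (simp add: SQ_def)

lemma repr: "abs_Q t = SQ (Pm t) - SQ (Nm t)"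
proof (induction t)
  case (Var n)
  then show ?case
    by (simp add: SQ_def IQ_def genQ_def zero_Q_def eQ_def)
next
  case (App s t)
  have "abs_Q (App s t) = qm (abs_Q s) (abs_Q t)" by (simp add: qm.abs_eq)
  also have "\<dots> = phi (abs_Q s) + kQ - abs_Q t" by (rule qm_formula)
  also have "\<dots> = SQ (Pm (App s t)) - SQ (Nm (App s t))"
  proof -
    have a: "SQ (Pm (App s t)) = phi (SQ (Pm s)) + SQ (Nm t) + kQ"
      by (simp only: Pm.simps SQ_plus SQ_flp SQ_single) (simp add: IQ_def genQ_def)
    have b: "SQ (Nm (App s t)) = phi (SQ (Nm s)) + SQ (Pm t)"
      by (simp only: Nm.simps SQ_plus SQ_flp)
    show ?thesis unfolding a b App.IH phi_diff by (simp add: algebra_simps)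
  qed
  finally show ?case .
qed


definition wt :: "int \<Rightarrow> (nat \<Rightarrow> int) \<Rightarrow> bool \<times> nat \<Rightarrow> int" where
  "wt p v x = (if fst x then p else 1) * (if snd x = 0 then (p - 2) * v 0 else v (snd x) - v 0)"

definition SW :: "int \<Rightarrow> (nat \<Rightarrow> int) \<Rightarrow> (bool \<times> nat) multiset \<Rightarrow> int" where
  "SW p v M = sum_mset (image_mset (wt p v) M)"

lemma wt_flp: "p * p = 1 \<Longrightarrow> wt p v (flp x) = p * wt p v x"
proof -
  assume h: "p * p = 1"
  have pp: "p * (p * y) = y" for y by (metis h mult.assoc mult_1)
  show ?thesis by (cases x) (simp add: wt_def flp_def pp h)
qed

lemma SW_flp: "p * p = 1 \<Longrightarrow> SW p v (image_mset flp M) = p * SW p v M"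
  by (induction M) (simp_all add: SW_def wt_flp algebra_simps)

lemma eval_repr: "p * p = 1 \<Longrightarrow> eval (\<lambda>x y. p * x - y) v t = v 0 + SW p v (Pm t) - SW p v (Nm t)"
proof (induction t)
  case (Var n)
  then show ?case by (simp add: SW_def wt_def)
next
  case (App s t)
  have a: "SW p v (Pm (App s t)) = p * SW p v (Pm s) + SW p v (Nm t) + (p - 2) * v 0"
    using App.prems by (simp add: SW_flp[symmetric]) (simp add: SW_def wt_def)
  have b: "SW p v (Nm (App s t)) = p * SW p v (Nm s) + SW p v (Pm t)"
    using App.prems by (simp add: SW_flp[symmetric]) (simp add: SW_def)
  have e: "eval (\<lambda>x y. p * x - y) v (App s t) = p * eval (\<lambda>x y. p * x - y) v s - eval (\<lambda>x y. p * x - y) v t"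
    by simp
  show ?case unfolding e a b App.IH(1)[OF App.prems] App.IH(2)[OF App.prems] by (simp add: algebra_simps)
qed

lemma sum_two:
  assumes "\<And>x. x \<noteq> k1 \<Longrightarrow> x \<noteq> k2 \<Longrightarrow> f x = (0::int)" "k1 \<noteq> k2"
  shows "sum_mset (image_mset f M) = int (count M k1) * f k1 + int (count M k2) * f k2"
  using assms by (induction M) (auto simp: algebra_simps)

definition D :: "gterm \<Rightarrow> bool \<Rightarrow> nat \<Rightarrow> int" where
  "D s b n = int (count (Pm s) (b, n)) - int (count (Nm s) (b, n))"

lemma eval_ind:
  assumes "n \<noteq> 0" "p * p = 1"
  shows "eval (\<lambda>x y. p * x - y) (\<lambda>m. if m = n then 1 else 0) s = D s False n + p * D s True n"
proof -
  let ?v = "\<lambda>m. if m = n then 1 else (0::int)"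
  have z: "wt p ?v x = 0" if "x \<noteq> (False, n)" "x \<noteq> (True, n)" for x
    using that assms by (cases x) (auto simp: wt_def)
  have "SW p ?v M = int (count M (False, n)) * 1 + int (count M (True, n)) * p" for M
    unfolding SW_def using sum_two[of "(False, n)" "(True, n)" "wt p ?v" M] z assms
    by (simp add: wt_def)
  thus ?thesis using eval_repr[OF assms(2), of ?v s] assms by (simp add: D_def algebra_simps)
qed

lemma eval_one:
  assumes "p * p = 1"
  shows "eval (\<lambda>x y. p * x - y) (\<lambda>m. 1) s = 1 + (p - 2) * (D s False 0 + p * D s True 0)"
proof -
  let ?v = "\<lambda>m. (1::int)"
  have z: "wt p ?v x = 0" if "x \<noteq> (False, 0)" "x \<noteq> (True, 0)" for x
    using that by (cases x) (auto simp: wt_def)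
  have sw: "SW p ?v M = (p - 2) * (int (count M (False, 0)) + p * int (count M (True, 0)))" for M
  proof -
    have "SW p ?v M = int (count M (False, 0)) * (p - 2) + int (count M (True, 0)) * (p * (p - 2))"
      unfolding SW_def using sum_two[of "(False, 0)" "(True, 0)" "wt p ?v" M] z
      by (simp add: wt_def)
    thus ?thesis by (simp add: algebra_simps)
  qed
  have r: "eval (\<lambda>x y. p * x - y) ?v s = 1 + SW p ?v (Pm s) - SW p ?v (Nm s)"
    using eval_repr[OF assms, of ?v s] by simp
  show ?thesis unfolding r sw D_def by (simp add: algebra_simps)
qed

lemma D_eq:
  assumes "(s, t) \<in> Sigma24"
  shows "D s b n = D t b n"
proof -
  have h1: "eval (\<lambda>x y. 1 * x - y) v s = eval (\<lambda>x y. 1 * x - y) v t" for v :: "nat \<Rightarrow> int"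
  proof -
    have "eval (\<lambda>x y :: int. x - y) v s = eval (\<lambda>x y. x - y) v t"
      using assms unfolding Sigma24_def holds_in_def by auto
    thus ?thesis by simp
  qed
  have h2: "eval (\<lambda>x y. (-1) * x - y) v s = eval (\<lambda>x y. (-1) * x - y) v t" for v :: "nat \<Rightarrow> int"
  proof -
    have "eval (\<lambda>x y :: int. - x - y) v s = eval (\<lambda>x y. - x - y) v t"
      using assms unfolding Sigma24_def holds_in_def by auto
    thus ?thesis by simp
  qed
  show ?thesis
  proof (cases "n = 0")
    case True
    have "1 + (1 - 2) * (D s False 0 + 1 * D s True 0) = 1 + (1 - 2) * (D t False 0 + 1 * D t True 0)"
      using h1[of "\<lambda>m. 1"] eval_one[of 1 s] eval_one[of 1 t] by simp
    moreover have "1 + (-1 - 2) * (D s False 0 + (-1) * D s True 0) = 1 + (-1 - 2) * (D t False 0 + (-1) * D t True 0)"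
      using h2[of "\<lambda>m. 1"] eval_one[of "-1" s] eval_one[of "-1" t] by simp
    ultimately show ?thesis using True by (cases b) auto
  next
    case False
    have "D s False n + 1 * D s True n = D t False n + 1 * D t True n"
      using h1[of "\<lambda>m. if m = n then 1 else 0"] eval_ind[OF False, of 1 s] eval_ind[OF False, of 1 t] by simp
    moreover have "D s False n + (-1) * D s True n = D t False n + (-1) * D t True n"
      using h2[of "\<lambda>m. if m = n then 1 else 0"] eval_ind[OF False, of "-1" s] eval_ind[OF False, of "-1" t] by simp
    ultimately show ?thesis by (cases b) auto
  qed
qed

lemma complete:
  assumes "(s, t) \<in> Sigma24"
  shows "derivable EE s t"
proof -
  have "Pm s + Nm t = Pm t + Nm s"
  proof (rule multiset_eqI)
    fix x :: "bool \<times> nat"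
    obtain b n where x: "x = (b, n)" by (cases x)
    show "count (Pm s + Nm t) x = count (Pm t + Nm s) x"
      using D_eq[OF assms, of b n] unfolding x D_def by simp
  qed
  hence "SQ (Pm s) + SQ (Nm t) = SQ (Pm t) + SQ (Nm s)" by (metis SQ_plus)
  hence "abs_Q s = abs_Q t" unfolding repr by (simp add: algebra_simps)
  thus ?thesis by (simp add: Q.abs_eq_iff)
qed

lemma eval_subst: "eval f v (subst \<sigma> t) = eval f (\<lambda>n. eval f v (\<sigma> n)) t"
  by (induction t) auto

lemma sound:
  assumes "\<And>a b w. (a, b) \<in> E \<Longrightarrow> eval f w a = eval f w b"
  shows "derivable E s t \<Longrightarrow> eval f v s = eval f v t"
  by (induction arbitrary: v rule: derivable.induct) (auto simp: eval_subst assms)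

lemma EE_holds1: "(a, b) \<in> EE \<Longrightarrow> eval (\<lambda>x y :: int. x - y) w a = eval (\<lambda>x y. x - y) w b"
  unfolding EE_def B24_def by (auto simp: algebra_simps)

lemma EE_holds2: "(a, b) \<in> EE \<Longrightarrow> eval (\<lambda>x y :: int. - x - y) w a = eval (\<lambda>x y. - x - y) w b"
  unfolding EE_def B24_def by (auto simp: algebra_simps)

theorem theorem3p1:
  shows "is_basis (insert (vx \<cdot> (vx \<cdot> vy), vy) B24) Sigma24"
  unfolding is_basis_def EE_def[symmetric]
proof (rule set_eqI)
  fix e :: "gterm \<times> gterm"
  obtain s t where e: "e = (s, t)" by (cases e)
  show "e \<in> consequences EE \<longleftrightarrow> e \<in> Sigma24"
  proof
    assume "e \<in> consequences EE"
    hence d: "derivable EE s t" unfolding consequences_def e by simp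
    show "e \<in> Sigma24"
      unfolding e Sigma24_def holds_in_def
      using sound[OF EE_holds1 d] sound[OF EE_holds2 d] by simp
  next
    assume "e \<in> Sigma24"
    thus "e \<in> consequences EE" unfolding consequences_def e using complete by simp
  qed
qed

end
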